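(* Let $K$ be a field and $L$ a $K$-space carrying an algebra $(L,\nabla,\eta)$ and a coalgebra $(L,\Delta,\epsilon)$ such that $\epsilon\circ\eta=\mathrm{id}_K$ and $\Delta\circ\eta=\eta\otimes\eta$. Let $1_L=\eta(1_K)$, $H=\mathrm{Hom}_K(L,L)$, $\underline H=\mathrm{Hom}_K(L\otimes L,L\otimes L)$, $H_1=\{f\in H\mid f(1_L)=1_L\}$, $\underline H_1=\{F\in\underline H\mid F(1_L\otimes1_L)=1_L\otimes1_L\}$, and let $s:\underline H\to H\otimes H$ be the split map $s(F)=F_1\otimes F_2$ with $F_1(x)=(\mathrm{id}_L\otimes\epsilon)(F(x\otimes1_L))$, $F_2(x)=(\epsilon\otimes\mathrm{id}_L)(F(1_L\otimes x))$. Then for every $f\in H_1$, $\Delta\circ f\circ\nabla\in\underline H_1$ and $s(\Delta\circ f\circ\nabla)=f\otimes f$. Moreover, for any linearly independent set $\mathcal B\subseteq H_1$ with span $H_{\mathcal B}$, defining $\Delta_{\mathcal B}(\sum_b x_b b)=\sum_b x_b\,b\otimes b$ and $\epsilon_{\mathcal B}(f)=\epsilon(f(1_L))$, $(H_{\mathcal B},\Delta_{\mathcal B},\epsilon_{\mathcal B})$ is a coalgebra.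
   Context: The identifications $L\otimes K\cong L\cong K\otimes L$ are used in the definitions of $F_1,F_2$. *)

theory Defs
  imports Complex_Main "HOL-Library.Function_Algebras"
begin

text \<open>An element of A (x) B is represented by the bilinear form it induces on pairs of
linear functionals: x (x) y corresponds to (alpha, beta) maps to alpha x * beta y.
Over a field this representation is injective, so A (x) B is identified with the
span of the elementary tensors inside this function space.\<close>

type_synonym ('a, 'b, 'k) tens = "('a \<Rightarrow> 'k) \<Rightarrow> ('b \<Rightarrow> 'k) \<Rightarrow> 'k"

definition dual :: "('k::field \<Rightarrow> 'a::ab_group_add \<Rightarrow> 'a) \<Rightarrow> ('a \<Rightarrow> 'k) set" where
  "dual sA = {\<alpha>. Vector_Spaces.linear sA ((*) :: 'k \<Rightarrow> 'k \<Rightarrow> 'k) \<alpha>}"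

definition tensor ::
  "('k::field \<Rightarrow> 'a::ab_group_add \<Rightarrow> 'a) \<Rightarrow> ('k \<Rightarrow> 'b::ab_group_add \<Rightarrow> 'b) \<Rightarrow> 'a \<Rightarrow> 'b \<Rightarrow> ('a, 'b, 'k) tens" where
  "tensor sA sB x y = (\<lambda>\<alpha> \<beta>. if \<alpha> \<in> dual sA \<and> \<beta> \<in> dual sB then \<alpha> x * \<beta> y else 0)"

definition tscale :: "'k::field \<Rightarrow> ('a, 'b, 'k) tens \<Rightarrow> ('a, 'b, 'k) tens" where
  "tscale c t = (\<lambda>\<alpha> \<beta>. c * t \<alpha> \<beta>)"

definition tensors ::
  "('k::field \<Rightarrow> 'a::ab_group_add \<Rightarrow> 'a) \<Rightarrow> ('k \<Rightarrow> 'b::ab_group_add \<Rightarrow> 'b) \<Rightarrow> 'a set \<Rightarrow> 'b set \<Rightarrow> ('a, 'b, 'k) tens set" where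
  "tensors sA sB A B = {t. \<exists>(n::nat) x y. (\<forall>i<n. x i \<in> A \<and> y i \<in> B) \<and>
       t = (\<Sum>i<n. tensor sA sB (x i) (y i))}"

text \<open>the linear map A (x) B -> C induced by a bilinear map g (universal property)\<close>
definition tlift ::
  "('k::field \<Rightarrow> 'a::ab_group_add \<Rightarrow> 'a) \<Rightarrow> ('k \<Rightarrow> 'b::ab_group_add \<Rightarrow> 'b) \<Rightarrow> 'a set \<Rightarrow> 'b set
     \<Rightarrow> ('a \<Rightarrow> 'b \<Rightarrow> 'c::comm_monoid_add) \<Rightarrow> ('a, 'b, 'k) tens \<Rightarrow> 'c" where
  "tlift sA sB A B g t = (THE z. \<exists>(n::nat) x y. (\<forall>i<n. x i \<in> A \<and> y i \<in> B) \<and>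
       t = (\<Sum>i<n. tensor sA sB (x i) (y i)) \<and> z = (\<Sum>i<n. g (x i) (y i)))"

definition map_tensor ::
  "('k::field \<Rightarrow> 'a::ab_group_add \<Rightarrow> 'a) \<Rightarrow> ('k \<Rightarrow> 'b::ab_group_add \<Rightarrow> 'b)
   \<Rightarrow> ('k \<Rightarrow> 'c::ab_group_add \<Rightarrow> 'c) \<Rightarrow> ('k \<Rightarrow> 'd::ab_group_add \<Rightarrow> 'd)
   \<Rightarrow> 'a set \<Rightarrow> 'b set \<Rightarrow> ('a \<Rightarrow> 'c) \<Rightarrow> ('b \<Rightarrow> 'd) \<Rightarrow> ('a, 'b, 'k) tens \<Rightarrow> ('c, 'd, 'k) tens" where
  "map_tensor sA sB sC sD A B f g = tlift sA sB A B (\<lambda>a b. tensor sC sD (f a) (g b))"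

definition tassoc ::
  "('k::field \<Rightarrow> 'a::ab_group_add \<Rightarrow> 'a) \<Rightarrow> ('k \<Rightarrow> 'b::ab_group_add \<Rightarrow> 'b) \<Rightarrow> ('k \<Rightarrow> 'c::ab_group_add \<Rightarrow> 'c)
   \<Rightarrow> 'a set \<Rightarrow> 'b set \<Rightarrow> 'c set
   \<Rightarrow> (('a, 'b, 'k) tens, 'c, 'k) tens \<Rightarrow> ('a, ('b, 'c, 'k) tens, 'k) tens" where
  "tassoc sA sB sC A B C = tlift tscale sC (tensors sA sB A B) C
     (\<lambda>t c. tlift sA sB A B (\<lambda>a b. tensor sA tscale a (tensor sB sC b c)) t)"

definition lin_on :: "('k::field \<Rightarrow> 'a::ab_group_add \<Rightarrow> 'a) \<Rightarrow> ('k \<Rightarrow> 'b::ab_group_add \<Rightarrow> 'b) \<Rightarrow> 'a set \<Rightarrow> ('a \<Rightarrow> 'b) \<Rightarrow> bool" where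
  "lin_on sA sB A f \<longleftrightarrow> (\<forall>x\<in>A. \<forall>y\<in>A. f (x + y) = f x + f y) \<and> (\<forall>c. \<forall>x\<in>A. f (sA c x) = sB c (f x))"

definition hom_on :: "('k::field \<Rightarrow> 'a::ab_group_add \<Rightarrow> 'a) \<Rightarrow> ('k \<Rightarrow> 'b::ab_group_add \<Rightarrow> 'b) \<Rightarrow> 'a set \<Rightarrow> 'b set \<Rightarrow> ('a \<Rightarrow> 'b) \<Rightarrow> bool" where
  "hom_on sA sB A B f \<longleftrightarrow> lin_on sA sB A f \<and> (\<forall>x\<in>A. f x \<in> B)"

definition algebra :: "('k::field \<Rightarrow> 'a::ab_group_add \<Rightarrow> 'a) \<Rightarrow> 'a set \<Rightarrow> (('a, 'a, 'k) tens \<Rightarrow> 'a) \<Rightarrow> ('k \<Rightarrow> 'a) \<Rightarrow> bool" where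
  "algebra sV V mu eta \<longleftrightarrow>
     vector_space sV \<and> module.subspace sV V \<and>
     hom_on tscale sV (tensors sV sV V V) V mu \<and>
     hom_on ((*) :: 'k \<Rightarrow> 'k \<Rightarrow> 'k) sV UNIV V eta \<and>
     (\<forall>w \<in> tensors tscale sV (tensors sV sV V V) V.
        mu (map_tensor tscale sV sV sV (tensors sV sV V V) V mu id w)
      = mu (map_tensor sV tscale sV sV V (tensors sV sV V V) id mu (tassoc sV sV sV V V V w))) \<and>
     (\<forall>w \<in> tensors (*) sV UNIV V.
        mu (map_tensor (*) sV sV sV UNIV V eta id w) = tlift (*) sV UNIV V (\<lambda>c v. sV c v) w) \<and>
     (\<forall>w \<in> tensors sV (*) V UNIV.
        mu (map_tensor sV (*) sV sV V UNIV id eta w) = tlift sV (*) V UNIV (\<lambda>v c. sV c v) w)"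

definition coalgebra :: "('k::field \<Rightarrow> 'a::ab_group_add \<Rightarrow> 'a) \<Rightarrow> 'a set \<Rightarrow> ('a \<Rightarrow> ('a, 'a, 'k) tens) \<Rightarrow> ('a \<Rightarrow> 'k) \<Rightarrow> bool" where
  "coalgebra sV V Delta eps \<longleftrightarrow>
     vector_space sV \<and> module.subspace sV V \<and>
     hom_on sV tscale V (tensors sV sV V V) Delta \<and>
     lin_on sV ((*) :: 'k \<Rightarrow> 'k \<Rightarrow> 'k) V eps \<and>
     (\<forall>v\<in>V. tassoc sV sV sV V V V (map_tensor sV sV tscale sV V V Delta id (Delta v))
            = map_tensor sV sV sV tscale V V id Delta (Delta v)) \<and>
     (\<forall>v\<in>V. tlift sV sV V V (\<lambda>a b. sV (eps a) b) (Delta v) = v) \<and>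
     (\<forall>v\<in>V. tlift sV sV V V (\<lambda>a b. sV (eps b) a) (Delta v) = v)"

definition hscale :: "('k::field \<Rightarrow> 'l::ab_group_add \<Rightarrow> 'l) \<Rightarrow> 'k \<Rightarrow> ('l \<Rightarrow> 'l) \<Rightarrow> ('l \<Rightarrow> 'l)" where
  "hscale sL c f = (\<lambda>x. sL c (f x))"

definition Hom :: "('k::field \<Rightarrow> 'l::ab_group_add \<Rightarrow> 'l) \<Rightarrow> ('l \<Rightarrow> 'l) set" where
  "Hom sL = {f. Vector_Spaces.linear sL sL f}"

definition Hom1 :: "('k::field \<Rightarrow> 'l::ab_group_add \<Rightarrow> 'l) \<Rightarrow> 'l \<Rightarrow> ('l \<Rightarrow> 'l) set" where
  "Hom1 sL one = {f \<in> Hom sL. f one = one}"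

definition HomT :: "('k::field \<Rightarrow> 'l::ab_group_add \<Rightarrow> 'l) \<Rightarrow> (('l, 'l, 'k) tens \<Rightarrow> ('l, 'l, 'k) tens) set" where
  "HomT sL = {F. hom_on tscale tscale (tensors sL sL UNIV UNIV) (tensors sL sL UNIV UNIV) F}"

definition HomT1 :: "('k::field \<Rightarrow> 'l::ab_group_add \<Rightarrow> 'l) \<Rightarrow> 'l \<Rightarrow> (('l, 'l, 'k) tens \<Rightarrow> ('l, 'l, 'k) tens) set" where
  "HomT1 sL one = {F \<in> HomT sL. F (tensor sL sL one one) = tensor sL sL one one}"

text \<open>the split map s(F) = F_1 (x) F_2, using L (x) K = L = K (x) L\<close>
definition split1 :: "('k::field \<Rightarrow> 'l::ab_group_add \<Rightarrow> 'l) \<Rightarrow> 'l \<Rightarrow> ('l \<Rightarrow> 'k)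
    \<Rightarrow> (('l, 'l, 'k) tens \<Rightarrow> ('l, 'l, 'k) tens) \<Rightarrow> 'l \<Rightarrow> 'l" where
  "split1 sL one eps F = (\<lambda>x. tlift sL sL UNIV UNIV (\<lambda>a b. sL (eps b) a) (F (tensor sL sL x one)))"

definition split2 :: "('k::field \<Rightarrow> 'l::ab_group_add \<Rightarrow> 'l) \<Rightarrow> 'l \<Rightarrow> ('l \<Rightarrow> 'k)
    \<Rightarrow> (('l, 'l, 'k) tens \<Rightarrow> ('l, 'l, 'k) tens) \<Rightarrow> 'l \<Rightarrow> 'l" where
  "split2 sL one eps F = (\<lambda>x. tlift sL sL UNIV UNIV (\<lambda>a b. sL (eps a) b) (F (tensor sL sL one x)))"

definition split_map :: "('k::field \<Rightarrow> 'l::ab_group_add \<Rightarrow> 'l) \<Rightarrow> 'l \<Rightarrow> ('l \<Rightarrow> 'k)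
    \<Rightarrow> (('l, 'l, 'k) tens \<Rightarrow> ('l, 'l, 'k) tens) \<Rightarrow> ('l \<Rightarrow> 'l, 'l \<Rightarrow> 'l, 'k) tens" where
  "split_map sL one eps F = tensor (hscale sL) (hscale sL) (split1 sL one eps F) (split2 sL one eps F)"

definition DeltaB :: "('k::field \<Rightarrow> 'l::ab_group_add \<Rightarrow> 'l) \<Rightarrow> ('l \<Rightarrow> 'l) set
    \<Rightarrow> ('l \<Rightarrow> 'l) \<Rightarrow> ('l \<Rightarrow> 'l, 'l \<Rightarrow> 'l, 'k) tens" where
  "DeltaB sL B h = (\<Sum>b \<in> {b \<in> B. module.representation (hscale sL) B h b \<noteq> 0}.
      tscale (module.representation (hscale sL) B h b) (tensor (hscale sL) (hscale sL) b b))"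

end

theory Submission
  imports Defs
begin


lemma lin_add: "Vector_Spaces.linear s1 s2 f \<Longrightarrow> f (x + y) = f x + f y"
  by (simp add: Vector_Spaces.linear_iff)
lemma lin_scale: "Vector_Spaces.linear s1 s2 f \<Longrightarrow> f (s1 c x) = s2 c (f x)"
  by (simp add: Vector_Spaces.linear_iff)

lemma fun_sum_apply: "sum f I x = sum (\<lambda>i. f i x) I"
  by (induction I rule: infinite_finite_induct) auto

lemma vs_mult: "vector_space ((*) :: 'k::field \<Rightarrow> 'k \<Rightarrow> 'k)"
  by (simp add: vector_space_def algebra_simps)

lemma vs_tscale: "vector_space (tscale :: 'k::field \<Rightarrow> ('a,'b,'k) tens \<Rightarrow> ('a,'b,'k) tens)"
  by (simp add: vector_space_def tscale_def algebra_simps plus_fun_def)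

lemma vs_hscale: "vector_space sL \<Longrightarrow> vector_space (hscale sL)"
  by (simp add: vector_space_def hscale_def plus_fun_def)

lemma vs_sep:
  assumes "vector_space s" "x \<noteq> 0"
  shows "\<exists>\<alpha>. Vector_Spaces.linear s ((*)::'k::field\<Rightarrow>_) \<alpha> \<and> \<alpha> x \<noteq> 0"
proof -
  interpret vector_space s by fact
  define X where "X = extend_basis {}"
  have X: "independent X" "span X = UNIV"
    unfolding X_def using independent_extend_basis[of "{}"] span_extend_basis[of "{}"] independent_empty by auto
  have "\<exists>b. representation X x b \<noteq> 0"
  proof (rule ccontr)
    assume "\<not> ?thesis"
    then have "{b. representation X x b \<noteq> 0} = {}" by auto
    with sum_nonzero_representation_eq[OF X(1), of x] X(2) assms(2) show False by auto
  qed
  then obtain b where "representation X x b \<noteq> 0" by auto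
  then show ?thesis using linear_representation[OF X] by blast
qed

lemma vs_sep_eq:
  assumes "vector_space s" "\<And>\<alpha>. Vector_Spaces.linear s ((*)::'k::field\<Rightarrow>_) \<alpha> \<Longrightarrow> \<alpha> x = \<alpha> y"
  shows "x = y"
proof (rule ccontr)
  assume "x \<noteq> y"
  then obtain \<alpha> where a: "Vector_Spaces.linear s ((*)::'k::field\<Rightarrow>_) \<alpha>" "\<alpha> (x - y) \<noteq> 0"
    using vs_sep[OF assms(1), of "x - y"] by auto
  have "\<alpha> (x - y) = \<alpha> x - \<alpha> y"
    using lin_add[OF a(1), of "x - y" y] by simp
  with assms(2)[OF a(1)] a(2) show False by simp
qed

definition balanced :: "('k::field \<Rightarrow> 'a::ab_group_add \<Rightarrow> 'a) \<Rightarrow> ('k \<Rightarrow> 'b::ab_group_add \<Rightarrow> 'b)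
   \<Rightarrow> 'a set \<Rightarrow> 'b set \<Rightarrow> ('a \<Rightarrow> 'b \<Rightarrow> 'c::ab_group_add) \<Rightarrow> bool" where
  "balanced sA sB A B g \<longleftrightarrow>
    (\<forall>x\<in>A. \<forall>x'\<in>A. \<forall>y\<in>B. g (x + x') y = g x y + g x' y) \<and>
    (\<forall>x\<in>A. \<forall>y\<in>B. \<forall>y'\<in>B. g x (y + y') = g x y + g x y') \<and>
    (\<forall>c. \<forall>x\<in>A. \<forall>y\<in>B. g (sA c x) y = g x (sB c y))"

lemma bal_sum_right:
  assumes bal: "balanced sA sB A B g" and sub: "module.subspace sB B" and ms: "module sB"
    and x: "x \<in> A" and fin: "finite E" and y: "\<And>e. e \<in> E \<Longrightarrow> y e \<in> B"
  shows "g x (\<Sum>e\<in>E. y e) = (\<Sum>e\<in>E. g x (y e))"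
  using fin y
proof (induction E rule: finite_induct)
  case empty
  have z: "0 \<in> B" using module.subspace_0[OF ms sub] .
  have "g x (0 + 0) = g x 0 + g x 0" using bal x z unfolding balanced_def by blast
  then show ?case by simp
next
  case (insert a F)
  have "(\<Sum>e\<in>F. y e) \<in> B" by (rule module.subspace_sum[OF ms sub]) (use insert in auto)
  then show ?case using insert bal x unfolding balanced_def by simp
qed

lemma bal_sum_left:
  assumes bal: "balanced sA sB A B g" and sub: "module.subspace sA A" and ms: "module sA"
    and y: "y \<in> B" and fin: "finite E" and x: "\<And>e. e \<in> E \<Longrightarrow> x e \<in> A"
  shows "g (\<Sum>e\<in>E. x e) y = (\<Sum>e\<in>E. g (x e) y)"
  using fin x
proof (induction E rule: finite_induct)
  case empty
  have z: "0 \<in> A" using module.subspace_0[OF ms sub] .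
  have "g (0 + 0) y = g 0 y + g 0 y" using bal y z unfolding balanced_def by blast
  then show ?case by simp
next
  case (insert a F)
  have "(\<Sum>e\<in>F. x e) \<in> A" by (rule module.subspace_sum[OF ms sub]) (use insert in auto)
  then show ?case using insert bal y unfolding balanced_def by simp
qed



lemma lin_zero: "Vector_Spaces.linear s1 s2 (f::'a::ab_group_add \<Rightarrow> 'b::ab_group_add) \<Longrightarrow> f 0 = 0"
  using lin_add[of s1 s2 f 0 0] by simp

lemma lin_sum: "Vector_Spaces.linear s1 s2 (f::'a::ab_group_add \<Rightarrow> 'b::ab_group_add) \<Longrightarrow> f (\<Sum>i\<in>I. x i) = (\<Sum>i\<in>I. f (x i))"
  by (induction I rule: infinite_finite_induct) (auto simp: lin_zero lin_add)

lemma expand: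
  fixes sA :: "'k::field \<Rightarrow> 'a::ab_group_add \<Rightarrow> 'a" and sB :: "'k \<Rightarrow> 'b::ab_group_add \<Rightarrow> 'b"
    and g :: "'a \<Rightarrow> 'b \<Rightarrow> 'c::ab_group_add"
  assumes vA: "vector_space sA" and vB: "vector_space sB"
    and sA: "module.subspace sA A" and sB: "module.subspace sB Bs"
    and bal: "balanced sA sB A Bs g"
    and X: "\<not> module.dependent sB X" "module.span sB X = UNIV"
    and E: "finite E" "E \<subseteq> Bs"
    and K: "finite K" "\<And>k. k \<in> K \<Longrightarrow> u k \<in> A \<and> w k \<in> Bs"
    and supp: "\<And>k b. k \<in> K \<Longrightarrow> module.representation sB X (w k) b \<noteq> 0 \<Longrightarrow> b \<in> E"
  shows "(\<Sum>k\<in>K. g (u k) (w k)) =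
     (\<Sum>e\<in>E. g (\<Sum>k\<in>K. sA (module.representation sB X (w k) e) (u k)) e)"
proof -
  interpret A: vector_space sA by fact
  interpret B: vector_space sB by fact
  let ?r = "B.representation X"
  have w: "w k = (\<Sum>e\<in>E. sB (?r (w k) e) e)" if "k \<in> K" for k
  proof -
    have "(\<Sum>e\<in>E. sB (?r (w k) e) e) = (\<Sum>e | ?r (w k) e \<noteq> 0. sB (?r (w k) e) e)"
      using supp[OF that] E(1) by (intro sum.mono_neutral_cong_right) auto
    also have "\<dots> = w k" using B.sum_nonzero_representation_eq[OF X(1)] X(2) by auto
    finally show ?thesis by simp
  qed
  have "(\<Sum>k\<in>K. g (u k) (w k)) = (\<Sum>k\<in>K. \<Sum>e\<in>E. g (sA (?r (w k) e) (u k)) e)"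
  proof (rule sum.cong[OF refl])
    fix k assume k: "k \<in> K"
    have "g (u k) (w k) = g (u k) (\<Sum>e\<in>E. sB (?r (w k) e) e)" using w[OF k] by simp
    also have "\<dots> = (\<Sum>e\<in>E. g (u k) (sB (?r (w k) e) e))"
      using E K(2)[OF k] by (intro bal_sum_right[OF bal sB B.module_axioms]) (auto intro: B.subspace_scale[OF sB])
    also have "\<dots> = (\<Sum>e\<in>E. g (sA (?r (w k) e) (u k)) e)"
      using E K(2)[OF k] bal unfolding balanced_def by (intro sum.cong) auto
    finally show "g (u k) (w k) = (\<Sum>e\<in>E. g (sA (?r (w k) e) (u k)) e)" .
  qed
  also have "\<dots> = (\<Sum>e\<in>E. \<Sum>k\<in>K. g (sA (?r (w k) e) (u k)) e)" by (rule sum.swap)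
  also have "\<dots> = (\<Sum>e\<in>E. g (\<Sum>k\<in>K. sA (?r (w k) e) (u k)) e)"
    using E K by (intro sum.cong[OF refl] bal_sum_left[OF bal sA A.module_axioms, symmetric])
       (auto intro: A.subspace_scale[OF sA])
  finally show ?thesis .
qed

lemma faithful:
  fixes sA :: "'k::field \<Rightarrow> 'a::ab_group_add \<Rightarrow> 'a" and sB :: "'k \<Rightarrow> 'b::ab_group_add \<Rightarrow> 'b"
    and g :: "'a \<Rightarrow> 'b \<Rightarrow> 'c::ab_group_add"
  assumes vA: "vector_space sA" and vB: "vector_space sB"
    and sA: "module.subspace sA A" and sB: "module.subspace sB Bs"
    and bal: "balanced sA sB A Bs g"
    and I: "finite I" "\<And>i. i \<in> I \<Longrightarrow> x i \<in> A \<and> y i \<in> Bs"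
    and J: "finite J" "\<And>j. j \<in> J \<Longrightarrow> x' j \<in> A \<and> y' j \<in> Bs"
    and H: "\<And>\<alpha> \<beta>. Vector_Spaces.linear sA (*) \<alpha> \<Longrightarrow> Vector_Spaces.linear sB (*) \<beta> \<Longrightarrow>
             (\<Sum>i\<in>I. \<alpha> (x i) * \<beta> (y i)) = (\<Sum>j\<in>J. \<alpha> (x' j) * \<beta> (y' j))"
  shows "(\<Sum>i\<in>I. g (x i) (y i)) = (\<Sum>j\<in>J. g (x' j) (y' j))"
proof -
  interpret A: vector_space sA by fact
  interpret B: vector_space sB by fact
  obtain Y where Y: "Y \<subseteq> Bs" "B.independent Y" "Bs \<subseteq> B.span Y"
    using B.maximal_independent_subset by blast
  define X where "X = B.extend_basis Y"
  have X: "B.independent X" "B.span X = UNIV" "Y \<subseteq> X"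
    unfolding X_def using Y(2) B.independent_extend_basis[OF Y(2)] B.extend_basis_superset[OF Y(2)] by auto
  let ?r = "B.representation X"
  have suppY: "b \<in> Y" if "v \<in> Bs" "?r v b \<noteq> 0" for v b
  proof -
    have "?r v = B.representation Y v"
      using B.representation_extend[OF X(1), of v Y] Y(3) that(1) X(3) by auto
    then show ?thesis using B.representation_ne_zero that(2) by metis
  qed
  define E where "E = (\<Union>i\<in>I. {b. ?r (y i) b \<noteq> 0}) \<union> (\<Union>j\<in>J. {b. ?r (y' j) b \<noteq> 0})"
  have Ef: "finite E" unfolding E_def using I(1) J(1) by (auto intro: B.finite_representation)
  have EB: "E \<subseteq> Bs" unfolding E_def using I J suppY Y(1) by blast
  have e1: "(\<Sum>i\<in>I. g (x i) (y i)) = (\<Sum>e\<in>E. g (\<Sum>i\<in>I. sA (?r (y i) e) (x i)) e)"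
    by (rule expand[OF vA vB sA sB bal X(1,2) Ef EB I]) (auto simp: E_def)
  have e2: "(\<Sum>j\<in>J. g (x' j) (y' j)) = (\<Sum>e\<in>E. g (\<Sum>j\<in>J. sA (?r (y' j) e) (x' j)) e)"
    by (rule expand[OF vA vB sA sB bal X(1,2) Ef EB J]) (auto simp: E_def)
  have eq: "(\<Sum>i\<in>I. sA (?r (y i) e) (x i)) = (\<Sum>j\<in>J. sA (?r (y' j) e) (x' j))" for e
  proof (rule vs_sep_eq[OF vA])
    fix \<alpha> :: "'a \<Rightarrow> 'k" assume a: "Vector_Spaces.linear sA (*) \<alpha>"
    have lb: "Vector_Spaces.linear sB (*) (\<lambda>v. ?r v e)" using B.linear_representation[OF X(1,2)] .
    have "\<alpha> (\<Sum>i\<in>I. sA (?r (y i) e) (x i)) = (\<Sum>i\<in>I. \<alpha> (x i) * ?r (y i) e)"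
      by (simp add: lin_sum[OF a] lin_scale[OF a] mult.commute)
    also have "\<dots> = (\<Sum>j\<in>J. \<alpha> (x' j) * ?r (y' j) e)" using H[OF a lb] .
    also have "\<dots> = \<alpha> (\<Sum>j\<in>J. sA (?r (y' j) e) (x' j))"
      by (simp add: lin_sum[OF a] lin_scale[OF a] mult.commute)
    finally show "\<alpha> (\<Sum>i\<in>I. sA (?r (y i) e) (x i)) = \<alpha> (\<Sum>j\<in>J. sA (?r (y' j) e) (x' j))" .
  qed
  show ?thesis unfolding e1 e2 eq ..
qed



lemma tensor_apply: "\<alpha> \<in> dual sA \<Longrightarrow> \<beta> \<in> dual sB \<Longrightarrow> tensor sA sB x y \<alpha> \<beta> = \<alpha> x * \<beta> y"
  by (simp add: tensor_def)

lemma sum_tensor_apply: "\<alpha> \<in> dual sA \<Longrightarrow> \<beta> \<in> dual sB \<Longrightarrow>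
   (\<Sum>i\<in>I. tensor sA sB (x i) (y i)) \<alpha> \<beta> = (\<Sum>i\<in>I. \<alpha> (x i) * \<beta> (y i))"
  by (simp add: fun_sum_apply tensor_def)

lemma tensor_add_left: "tensor sA sB (x + x') y = tensor sA sB x y + tensor sA sB x' y"
  by (rule ext)+ (auto simp: tensor_def dual_def lin_add algebra_simps)

lemma tensor_add_right: "tensor sA sB x (y + y') = tensor sA sB x y + tensor sA sB x y'"
  by (rule ext)+ (auto simp: tensor_def dual_def lin_add algebra_simps)

lemma tensor_scale_left: "tensor sA sB (sA c x) y = tscale c (tensor sA sB x y)"
  by (rule ext)+ (simp add: tensor_def tscale_def dual_def lin_scale algebra_simps)

lemma tensor_scale_right: "tensor sA sB x (sB c y) = tscale c (tensor sA sB x y)"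
  by (rule ext)+ (simp add: tensor_def tscale_def dual_def lin_scale algebra_simps)

lemma tscale_add: "tscale c (t + t') = tscale c t + tscale c t'"
  by (rule ext)+ (simp add: tscale_def algebra_simps)

lemma tscale_sum: "tscale c (\<Sum>i\<in>I. t i) = (\<Sum>i\<in>I. tscale c (t i))"
  by (rule ext)+ (simp add: tscale_def fun_sum_apply sum_distrib_left)

lemma tscale_tscale: "tscale c (tscale d t) = tscale (c * d) t"
  by (rule ext)+ (simp add: tscale_def)

lemma tscale_1: "tscale 1 t = t"
  by (rule ext)+ (simp add: tscale_def)

lemma finite_index: "finite I \<Longrightarrow> \<exists>n h. bij_betw h {..<(n::nat)} I"
  using ex_bij_betw_nat_finite[of I] by (auto simp: atLeast0LessThan)

lemma tlift_sum:
  fixes sA :: "'k::field \<Rightarrow> 'a::ab_group_add \<Rightarrow> 'a" and sB :: "'k \<Rightarrow> 'b::ab_group_add \<Rightarrow> 'b"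
    and g :: "'a \<Rightarrow> 'b \<Rightarrow> 'c::ab_group_add"
  assumes vA: "vector_space sA" and vB: "vector_space sB"
    and sA: "module.subspace sA A" and sB: "module.subspace sB Bs"
    and bal: "balanced sA sB A Bs g"
    and I: "finite I" "\<And>i. i \<in> I \<Longrightarrow> x i \<in> A \<and> y i \<in> Bs"
  shows "tlift sA sB A Bs g (\<Sum>i\<in>I. tensor sA sB (x i) (y i)) = (\<Sum>i\<in>I. g (x i) (y i))"
proof -
  obtain n h where h: "bij_betw h {..<(n::nat)} I" using finite_index[OF I(1)] by blast
  let ?t = "\<Sum>i\<in>I. tensor sA sB (x i) (y i)"
  show ?thesis unfolding tlift_def
  proof (rule the_equality)
    show "\<exists>(n::nat) x' y'. (\<forall>i<n. x' i \<in> A \<and> y' i \<in> Bs) \<and>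
        ?t = (\<Sum>i<n. tensor sA sB (x' i) (y' i)) \<and> (\<Sum>i\<in>I. g (x i) (y i)) = (\<Sum>i<n. g (x' i) (y' i))"
    proof (intro exI[where x=n] exI[where x="x \<circ> h"] exI[where x="y \<circ> h"] conjI allI impI)
      show "?t = (\<Sum>i<n. tensor sA sB ((x \<circ> h) i) ((y \<circ> h) i))"
        using sum.reindex_bij_betw[OF h, of "\<lambda>i. tensor sA sB (x i) (y i)"] by simp
      show "(\<Sum>i\<in>I. g (x i) (y i)) = (\<Sum>i<n. g ((x \<circ> h) i) ((y \<circ> h) i))"
        using sum.reindex_bij_betw[OF h, of "\<lambda>i. g (x i) (y i)"] by simp
      fix i assume "i < n"
      then show "(x \<circ> h) i \<in> A" "(y \<circ> h) i \<in> Bs" using h I(2) by (auto simp: bij_betw_apply)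
    qed
  next
    fix z assume "\<exists>(m::nat) x' y'. (\<forall>i<m. x' i \<in> A \<and> y' i \<in> Bs) \<and>
        ?t = (\<Sum>i<m. tensor sA sB (x' i) (y' i)) \<and> z = (\<Sum>i<m. g (x' i) (y' i))"
    then obtain m :: nat and x' y' where m: "\<forall>i<m. x' i \<in> A \<and> y' i \<in> Bs"
        "?t = (\<Sum>i<m. tensor sA sB (x' i) (y' i))" "z = (\<Sum>i<m. g (x' i) (y' i))" by blast
    have "(\<Sum>i\<in>I. g (x i) (y i)) = (\<Sum>i\<in>{..<m}. g (x' i) (y' i))"
    proof (rule faithful[OF vA vB sA sB bal I])
      show "finite {..<m}" by simp
      show "\<And>j. j \<in> {..<m} \<Longrightarrow> x' j \<in> A \<and> y' j \<in> Bs" using m(1) by auto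
      fix \<alpha> \<beta> assume a: "Vector_Spaces.linear sA (*) \<alpha>" and b: "Vector_Spaces.linear sB (*) \<beta>"
      then have ab: "\<alpha> \<in> dual sA" "\<beta> \<in> dual sB" by (auto simp: dual_def)
      have "(\<Sum>i\<in>I. \<alpha> (x i) * \<beta> (y i)) = ?t \<alpha> \<beta>" by (rule sum_tensor_apply[OF ab, symmetric])
      also have "\<dots> = (\<Sum>i<m. tensor sA sB (x' i) (y' i)) \<alpha> \<beta>" using m(2) by simp
      also have "\<dots> = (\<Sum>i<m. \<alpha> (x' i) * \<beta> (y' i))" by (rule sum_tensor_apply[OF ab])
      finally show "(\<Sum>i\<in>I. \<alpha> (x i) * \<beta> (y i)) = (\<Sum>j\<in>{..<m}. \<alpha> (x' j) * \<beta> (y' j))" by simp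
    qed
    then show "z = (\<Sum>i\<in>I. g (x i) (y i))" using m(3) by simp
  qed
qed

lemma tlift_single:
  fixes sA :: "'k::field \<Rightarrow> 'a::ab_group_add \<Rightarrow> 'a" and sB :: "'k \<Rightarrow> 'b::ab_group_add \<Rightarrow> 'b"
    and g :: "'a \<Rightarrow> 'b \<Rightarrow> 'c::ab_group_add"
  assumes vA: "vector_space sA" and vB: "vector_space sB"
    and sA: "module.subspace sA A" and sB: "module.subspace sB Bs"
    and bal: "balanced sA sB A Bs g" and "x \<in> A" "y \<in> Bs"
  shows "tlift sA sB A Bs g (tensor sA sB x y) = g x y"
  using tlift_sum[OF vA vB sA sB bal, of "{()}" "\<lambda>_. x" "\<lambda>_. y"] assms by simp

lemma tensors_sum:
  assumes "finite I" "\<And>i. i \<in> I \<Longrightarrow> x i \<in> A \<and> y i \<in> B"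
  shows "(\<Sum>i\<in>I. tensor sA sB (x i) (y i)) \<in> tensors sA sB A B"
proof -
  obtain n h where h: "bij_betw h {..<(n::nat)} I" using finite_index[OF assms(1)] by blast
  show ?thesis unfolding tensors_def
  proof (intro CollectI exI[where x=n] exI[where x="x \<circ> h"] exI[where x="y \<circ> h"] conjI allI impI)
      show "(\<Sum>i\<in>I. tensor sA sB (x i) (y i)) = (\<Sum>i<n. tensor sA sB ((x \<circ> h) i) ((y \<circ> h) i))"
        using sum.reindex_bij_betw[OF h, of "\<lambda>i. tensor sA sB (x i) (y i)"] by simp
      fix i assume "i < n"
      then show "(x \<circ> h) i \<in> A" "(y \<circ> h) i \<in> B" using h assms(2) by (auto simp: bij_betw_apply)
    qed
qed

lemma tensors_elem:
  assumes "t \<in> tensors sA sB A B"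
  obtains I :: "nat set" and x y where "finite I" "\<And>i. i \<in> I \<Longrightarrow> x i \<in> A \<and> y i \<in> B"
    "t = (\<Sum>i\<in>I. tensor sA sB (x i) (y i))"
  using assms unfolding tensors_def by (auto simp: lessThan_def)



lemma subUNIV: assumes "vector_space s" shows "module.subspace s UNIV"
proof -
  interpret vector_space s by fact
  show ?thesis by (rule subspace_UNIV)
qed

lemma tensor_single_in: "x \<in> A \<Longrightarrow> y \<in> B \<Longrightarrow> tensor sA sB x y \<in> tensors sA sB A B"
  using tensors_sum[of "{()}" "\<lambda>_. x" A "\<lambda>_. y" B sA sB] by simp

lemma part1:
  fixes sL :: "'k::field \<Rightarrow> 'l::ab_group_add \<Rightarrow> 'l"
    and mu :: "('l, 'l, 'k) tens \<Rightarrow> 'l"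
    and eta :: "'k \<Rightarrow> 'l"
    and Delta :: "'l \<Rightarrow> ('l, 'l, 'k) tens"
    and eps :: "'l \<Rightarrow> 'k"
  assumes vL: "vector_space sL"
    and alg: "algebra sL UNIV mu eta"
    and coa: "coalgebra sL UNIV Delta eps"
    and D1: "\<forall>c. Delta (eta c) = map_tensor (*) (*) sL sL UNIV UNIV eta eta (tensor (*) (*) c 1)"
    and f: "f \<in> Hom1 sL (eta 1)"
  shows "(\<lambda>t. Delta (f (mu t))) \<in> HomT1 sL (eta 1) \<and>
         split_map sL (eta 1) eps (\<lambda>t. Delta (f (mu t))) = tensor (hscale sL) (hscale sL) f f"
proof -
  interpret L: vector_space sL by fact
  have vK: "vector_space ((*)::'k\<Rightarrow>_)" by (rule vs_mult)
  note sK = subUNIV[OF vK] and sL = subUNIV[OF vL]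
  let ?T = "tensors sL sL UNIV UNIV"
  from alg have mu_add: "\<And>x y. x \<in> ?T \<Longrightarrow> y \<in> ?T \<Longrightarrow> mu (x + y) = mu x + mu y"
    and mu_scale: "\<And>c x. x \<in> ?T \<Longrightarrow> mu (tscale c x) = sL c (mu x)"
    and eta_add: "\<And>x y. eta (x + y) = eta x + eta y"
    and eta_scale: "\<And>c x. eta (c * x) = sL c (eta x)"
    and lu: "\<forall>w \<in> tensors (*) sL UNIV UNIV.
        mu (map_tensor (*) sL sL sL UNIV UNIV eta id w) = tlift (*) sL UNIV UNIV (\<lambda>c v. sL c v) w"
    and ru: "\<forall>w \<in> tensors sL (*) UNIV UNIV.
        mu (map_tensor sL (*) sL sL UNIV UNIV id eta w) = tlift sL (*) UNIV UNIV (\<lambda>v c. sL c v) w"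
    unfolding algebra_def hom_on_def lin_on_def by auto
  from coa have D_add: "\<And>x y. Delta (x + y) = Delta x + Delta y"
    and D_scale: "\<And>c x. Delta (sL c x) = tscale c (Delta x)"
    and D_in: "\<And>x. Delta x \<in> ?T"
    and cu1: "\<forall>v. tlift sL sL UNIV UNIV (\<lambda>a b. sL (eps a) b) (Delta v) = v"
    and cu2: "\<forall>v. tlift sL sL UNIV UNIV (\<lambda>a b. sL (eps b) a) (Delta v) = v"
    unfolding coalgebra_def hom_on_def lin_on_def by auto
  from f have fl: "Vector_Spaces.linear sL sL f" and f1: "f (eta 1) = eta 1"
    by (auto simp: Hom1_def Hom_def)
  have b1: "balanced (*) sL UNIV UNIV (\<lambda>a b. tensor sL sL (eta a) (id b))"
    unfolding balanced_def by (simp add: eta_add eta_scale tensor_add_left tensor_add_right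
        tensor_scale_left tensor_scale_right)
  have b2: "balanced (*) sL UNIV UNIV (\<lambda>c v. sL c v)"
    unfolding balanced_def by (simp add: L.scale_left_distrib L.scale_right_distrib mult.commute)
  have b3: "balanced sL (*) UNIV UNIV (\<lambda>a b. tensor sL sL (id a) (eta b))"
    unfolding balanced_def by (simp add: eta_add eta_scale tensor_add_left tensor_add_right
        tensor_scale_left tensor_scale_right)
  have b4: "balanced sL (*) UNIV UNIV (\<lambda>v c. sL c v)"
    unfolding balanced_def by (simp add: L.scale_left_distrib L.scale_right_distrib mult.commute)
  have b5: "balanced (*) (*) UNIV UNIV (\<lambda>a b. tensor sL sL (eta a) (eta b))"
    unfolding balanced_def by (simp add: eta_add eta_scale tensor_add_left tensor_add_right
        tensor_scale_left tensor_scale_right)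
  have mul: "mu (tensor sL sL (eta 1) x) = x" for x
  proof -
    have w: "tensor (*) sL 1 x \<in> tensors (*) sL UNIV UNIV" by (rule tensor_single_in) auto
    have "map_tensor (*) sL sL sL UNIV UNIV eta id (tensor (*) sL 1 x) = tensor sL sL (eta 1) x"
      unfolding map_tensor_def using tlift_single[OF vK vL sK sL b1] by simp
    then show ?thesis using lu[rule_format, OF w] tlift_single[OF vK vL sK sL b2, of 1 x] by simp
  qed
  have mur: "mu (tensor sL sL x (eta 1)) = x" for x
  proof -
    have w: "tensor sL (*) x 1 \<in> tensors sL (*) UNIV UNIV" by (rule tensor_single_in) auto
    have "map_tensor sL (*) sL sL UNIV UNIV id eta (tensor sL (*) x 1) = tensor sL sL x (eta 1)"
      unfolding map_tensor_def using tlift_single[OF vL vK sL sK b3] by simp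
    then show ?thesis using ru[rule_format, OF w] tlift_single[OF vL vK sL sK b4, of x 1] by simp
  qed
  have D1': "Delta (eta 1) = tensor sL sL (eta 1) (eta 1)"
    using D1 tlift_single[OF vK vK sK sK b5] unfolding map_tensor_def by simp
  let ?F = "\<lambda>t. Delta (f (mu t))"
  have "?F \<in> HomT sL"
    unfolding HomT_def hom_on_def lin_on_def
    by (auto simp: mu_add mu_scale lin_add[OF fl] lin_scale[OF fl] D_add D_scale D_in)
  moreover have "?F (tensor sL sL (eta 1) (eta 1)) = tensor sL sL (eta 1) (eta 1)"
    using mul[of "eta 1"] f1 D1' by simp
  ultimately have "?F \<in> HomT1 sL (eta 1)" by (simp add: HomT1_def)
  moreover have "split1 sL (eta 1) eps ?F = f"
    by (rule ext) (simp add: split1_def mur cu2)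
  moreover have "split2 sL (eta 1) eps ?F = f"
    by (rule ext) (simp add: split2_def mul cu1)
  ultimately show ?thesis by (simp add: split_map_def)
qed



lemma tscale_0: "tscale 0 t = 0"
  by (rule ext)+ (simp add: tscale_def)

lemma tensors_subspace:
  assumes vA: "vector_space sA" and sA: "module.subspace sA A"
  shows "module.subspace tscale (tensors sA sB A B)"
proof -
  interpret A: vector_space sA by fact
  interpret T: vector_space tscale by (rule vs_tscale)
  show ?thesis unfolding T.subspace_def
  proof (intro conjI ballI allI)
    show "0 \<in> tensors sA sB A B" using tensors_sum[of "{}" _ A _ B sA sB] by simp
  next
    fix t1 t2 assume t1: "t1 \<in> tensors sA sB A B" and t2: "t2 \<in> tensors sA sB A B"
    obtain I1 :: "nat set" and x1 y1 where a: "finite I1" "\<And>i. i \<in> I1 \<Longrightarrow> x1 i \<in> A \<and> y1 i \<in> B"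
      "t1 = (\<Sum>i\<in>I1. tensor sA sB (x1 i) (y1 i))" using tensors_elem[OF t1] by blast
    obtain I2 :: "nat set" and x2 y2 where b: "finite I2" "\<And>i. i \<in> I2 \<Longrightarrow> x2 i \<in> A \<and> y2 i \<in> B"
      "t2 = (\<Sum>i\<in>I2. tensor sA sB (x2 i) (y2 i))" using tensors_elem[OF t2] by blast
    have "t1 + t2 = (\<Sum>p\<in>I1 <+> I2. tensor sA sB (case_sum x1 x2 p) (case_sum y1 y2 p))"
      by (simp add: sum.Plus a(1) b(1) a(3) b(3) comp_def)
    also have "\<dots> \<in> tensors sA sB A B"
      by (rule tensors_sum) (use a b in auto)
    finally show "t1 + t2 \<in> tensors sA sB A B" .
  next
    fix c t assume t: "t \<in> tensors sA sB A B"
    obtain I :: "nat set" and x y where a: "finite I" "\<And>i. i \<in> I \<Longrightarrow> x i \<in> A \<and> y i \<in> B"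
      "t = (\<Sum>i\<in>I. tensor sA sB (x i) (y i))" using tensors_elem[OF t] by blast
    have "tscale c t = (\<Sum>i\<in>I. tensor sA sB (sA c (x i)) (y i))"
      by (simp add: a(3) tscale_sum tensor_scale_left)
    also have "\<dots> \<in> tensors sA sB A B"
      by (rule tensors_sum) (use a A.subspace_scale[OF sA] in auto)
    finally show "tscale c t \<in> tensors sA sB A B" .
  qed
qed

lemma G_balanced:
  fixes sA :: "'k::field \<Rightarrow> 'a::ab_group_add \<Rightarrow> 'a" and sB :: "'k \<Rightarrow> 'b::ab_group_add \<Rightarrow> 'b"
    and sC :: "'k \<Rightarrow> 'c::ab_group_add \<Rightarrow> 'c"
  assumes vA: "vector_space sA" and vB: "vector_space sB" and vC: "vector_space sC"
    and sA: "module.subspace sA A" and sB: "module.subspace sB B"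
  shows "balanced tscale sC (tensors sA sB A B) C
     (\<lambda>t c. tlift sA sB A B (\<lambda>a b. tensor sA tscale a (tensor sB sC b c)) t)"
proof -
  interpret A: vector_space sA by fact
  let ?k = "\<lambda>c a b. tensor sA tscale a (tensor sB sC b c)"
  have kb: "balanced sA sB A B (?k c)" for c
    unfolding balanced_def
  proof (intro conjI ballI allI)
    fix x x' y assume "x \<in> A" "x' \<in> A" "y \<in> B"
    show "?k c (x + x') y = ?k c x y + ?k c x' y" by (rule tensor_add_left)
  next
    fix x y y' assume "x \<in> A" "y \<in> B" "y' \<in> B"
    show "?k c x (y + y') = ?k c x y + ?k c x y'"
      by (simp only: tensor_add_left[of sB sC y y' c] tensor_add_right[of sA tscale x])
  next
    fix d x y assume "x \<in> A" "y \<in> B"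
    show "?k c (sA d x) y = ?k c x (sB d y)"
      by (simp only: tensor_scale_left[of sA tscale d x] tensor_scale_left[of sB sC d y c]
          tensor_scale_right[of sA tscale x d])
  qed
  have rep: "\<exists>I::nat set. \<exists>x y. finite I \<and> (\<forall>i\<in>I. x i \<in> A \<and> y i \<in> B) \<and>
      t = (\<Sum>i\<in>I. tensor sA sB (x i) (y i)) \<and>
      (\<forall>c. tlift sA sB A B (?k c) t = (\<Sum>i\<in>I. ?k c (x i) (y i)))"
    if t: "t \<in> tensors sA sB A B" for t
  proof -
    obtain I :: "nat set" and x y where a: "finite I" "\<And>i. i \<in> I \<Longrightarrow> x i \<in> A \<and> y i \<in> B"
      "t = (\<Sum>i\<in>I. tensor sA sB (x i) (y i))" using tensors_elem[OF t] by blast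
    show ?thesis
    proof (intro exI[where x=I] exI[where x=x] exI[where x=y] conjI allI ballI)
      fix c show "tlift sA sB A B (?k c) t = (\<Sum>i\<in>I. ?k c (x i) (y i))"
        unfolding a(3) by (rule tlift_sum[OF vA vB sA sB kb a(1,2)])
    qed (use a in auto)
  qed
  show ?thesis unfolding balanced_def
  proof (intro conjI ballI allI)
    fix t1 t2 c assume t1: "t1 \<in> tensors sA sB A B" and t2: "t2 \<in> tensors sA sB A B"
    obtain I1 :: "nat set" and x1 y1 where a: "finite I1" "\<And>i. i \<in> I1 \<Longrightarrow> x1 i \<in> A \<and> y1 i \<in> B"
      "t1 = (\<Sum>i\<in>I1. tensor sA sB (x1 i) (y1 i))" using tensors_elem[OF t1] by blast
    obtain I2 :: "nat set" and x2 y2 where b: "finite I2" "\<And>i. i \<in> I2 \<Longrightarrow> x2 i \<in> A \<and> y2 i \<in> B"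
      "t2 = (\<Sum>i\<in>I2. tensor sA sB (x2 i) (y2 i))" using tensors_elem[OF t2] by blast
    have "t1 + t2 = (\<Sum>p\<in>I1 <+> I2. tensor sA sB (case_sum x1 x2 p) (case_sum y1 y2 p))"
      by (simp add: sum.Plus a(1) b(1) a(3) b(3) comp_def)
    moreover have "tlift sA sB A B (?k c) (\<Sum>p\<in>I1 <+> I2. tensor sA sB (case_sum x1 x2 p) (case_sum y1 y2 p))
        = (\<Sum>p\<in>I1 <+> I2. ?k c (case_sum x1 x2 p) (case_sum y1 y2 p))"
      by (rule tlift_sum[OF vA vB sA sB kb]) (use a b in auto)
    moreover have "tlift sA sB A B (?k c) t1 = (\<Sum>i\<in>I1. ?k c (x1 i) (y1 i))"
      unfolding a(3) by (rule tlift_sum[OF vA vB sA sB kb]) (use a in auto)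
    moreover have "tlift sA sB A B (?k c) t2 = (\<Sum>i\<in>I2. ?k c (x2 i) (y2 i))"
      unfolding b(3) by (rule tlift_sum[OF vA vB sA sB kb]) (use b in auto)
    ultimately show "tlift sA sB A B (?k c) (t1 + t2) = tlift sA sB A B (?k c) t1 + tlift sA sB A B (?k c) t2"
      by (simp add: sum.Plus a(1) b(1) comp_def)
  next
    fix t c c' assume t: "t \<in> tensors sA sB A B"
    from rep[OF t] obtain I :: "nat set" and x y where r: "finite I"
      "\<forall>c. tlift sA sB A B (?k c) t = (\<Sum>i\<in>I. ?k c (x i) (y i))" by blast
    show "tlift sA sB A B (?k (c + c')) t = tlift sA sB A B (?k c) t + tlift sA sB A B (?k c') t"
      by (simp only: r(2)[rule_format]) (simp add: tensor_add_right sum.distrib)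
  next
    fix d t c assume t: "t \<in> tensors sA sB A B"
    from rep[OF t] obtain I :: "nat set" and x y where r: "finite I" "\<forall>i\<in>I. x i \<in> A \<and> y i \<in> B"
      "t = (\<Sum>i\<in>I. tensor sA sB (x i) (y i))"
      "\<forall>c. tlift sA sB A B (?k c) t = (\<Sum>i\<in>I. ?k c (x i) (y i))" by blast
    have "tscale d t = (\<Sum>i\<in>I. tensor sA sB (sA d (x i)) (y i))"
      by (simp add: r(3) tscale_sum tensor_scale_left)
    then have "tlift sA sB A B (?k c) (tscale d t) = (\<Sum>i\<in>I. ?k c (sA d (x i)) (y i))"
      using tlift_sum[OF vA vB sA sB kb r(1), of "\<lambda>i. sA d (x i)" y c] r(2)
        A.subspace_scale[OF sA] by auto
    also have "\<dots> = (\<Sum>i\<in>I. ?k (sC d c) (x i) (y i))"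
      by (simp add: tensor_scale_left tensor_scale_right)
    also have "\<dots> = tlift sA sB A B (?k (sC d c)) t" using r(4) by simp
    finally show "tlift sA sB A B (?k c) (tscale d t) = tlift sA sB A B (?k (sC d c)) t" .
  qed
qed



lemma k_balanced:
  fixes sA :: "'k::field \<Rightarrow> 'a::ab_group_add \<Rightarrow> 'a" and sB :: "'k \<Rightarrow> 'b::ab_group_add \<Rightarrow> 'b"
    and sC :: "'k \<Rightarrow> 'c::ab_group_add \<Rightarrow> 'c"
  shows "balanced sA sB A B (\<lambda>a b. tensor sA tscale a (tensor sB sC b c))"
  unfolding balanced_def
proof (intro conjI ballI allI)
  fix x x' y assume "x \<in> A" "x' \<in> A" "y \<in> B"
  show "tensor sA tscale (x + x') (tensor sB sC y c) = tensor sA tscale x (tensor sB sC y c) + tensor sA tscale x' (tensor sB sC y c)"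
    by (rule tensor_add_left)
next
  fix x y y' assume "x \<in> A" "y \<in> B" "y' \<in> B"
  show "tensor sA tscale x (tensor sB sC (y + y') c) = tensor sA tscale x (tensor sB sC y c) + tensor sA tscale x (tensor sB sC y' c)"
    by (simp only: tensor_add_left[of sB sC y y' c] tensor_add_right[of sA tscale x])
next
  fix d x y assume "x \<in> A" "y \<in> B"
  show "tensor sA tscale (sA d x) (tensor sB sC y c) = tensor sA tscale x (tensor sB sC (sB d y) c)"
    by (simp only: tensor_scale_left[of sA tscale d x] tensor_scale_left[of sB sC d y c]
        tensor_scale_right[of sA tscale x d])
qed

lemma part2:
  fixes sL :: "'k::field \<Rightarrow> 'l::ab_group_add \<Rightarrow> 'l"
    and eta :: "'k \<Rightarrow> 'l"
    and Delta :: "'l \<Rightarrow> ('l, 'l, 'k) tens"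
    and eps :: "'l \<Rightarrow> 'k"
  assumes vL: "vector_space sL"
    and coa: "coalgebra sL UNIV Delta eps"
    and e1: "\<forall>c. eps (eta c) = c"
    and BH: "B \<subseteq> Hom1 sL (eta 1)" and indep: "\<not> module.dependent (hscale sL) B"
  shows "coalgebra (hscale sL) (module.span (hscale sL) B) (DeltaB sL B) (\<lambda>f. eps (f (eta 1)))"
proof -
  define S where "S = hscale sL"
  have vS: "vector_space S" unfolding S_def by (rule vs_hscale[OF vL])
  interpret H: vector_space S by (rule vS)
  interpret L: vector_space sL by (rule vL)
  have indS: "\<not> H.dependent B" using indep by (simp add: S_def)
  define V where "V = H.span B"
  define R where "R = H.representation B"
  define e' where "e' = (\<lambda>f::'l\<Rightarrow>'l. eps (f (eta 1)))"
  define D where "D = DeltaB sL B"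
  have subV: "H.subspace V" unfolding V_def by (rule H.subspace_span)
  have BV: "B \<subseteq> V" unfolding V_def by (rule H.span_superset)
  from coa have eps_add: "\<And>x y. eps (x + y) = eps x + eps y"
    and eps_scale: "\<And>c x. eps (sL c x) = c * eps x"
    unfolding coalgebra_def lin_on_def by auto
  have e'_add: "e' (h1 + h2) = e' h1 + e' h2" for h1 h2 by (simp add: e'_def eps_add)
  have e'_scale: "e' (S c h) = c * e' h" for c h by (simp add: e'_def S_def hscale_def eps_scale)
  have e'_B: "e' b = 1" if "b \<in> B" for b
    using that BH e1 by (auto simp: e'_def Hom1_def)
  have suppf: "finite {b. R h b \<noteq> 0}" for h unfolding R_def by (rule H.finite_representation)
  have suppB: "{b. R h b \<noteq> 0} \<subseteq> B" for h unfolding R_def using H.representation_ne_zero by blast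
  have tz: "tensor S S (S 0 b) b = 0" for b
    by (simp only: tensor_scale_left tscale_0)
  have DF: "D h = (\<Sum>b\<in>F. tensor S S (S (R h b) b) b)" if "finite F" "{b. R h b \<noteq> 0} \<subseteq> F" for h F
  proof -
    have "D h = (\<Sum>b\<in>{b. R h b \<noteq> 0}. tensor S S (S (R h b) b) b)"
    proof -
      have "{b \<in> B. R h b \<noteq> 0} = {b. R h b \<noteq> 0}" using suppB by blast
      then show ?thesis unfolding D_def DeltaB_def
        by (simp add: R_def S_def tensor_scale_left)
    qed
    also have "\<dots> = (\<Sum>b\<in>F. tensor S S (S (R h b) b) b)"
      using that tz by (intro sum.mono_neutral_cong_left) auto
    finally show ?thesis .
  qed
  have D_add: "D (h1 + h2) = D h1 + D h2" if "h1 \<in> V" "h2 \<in> V" for h1 h2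
  proof -
    let ?F = "{b. R h1 b \<noteq> 0} \<union> {b. R h2 b \<noteq> 0}"
    have r: "R (h1 + h2) b = R h1 b + R h2 b" for b
      unfolding R_def using H.representation_add[OF indS] that unfolding V_def by simp
    have fin: "finite ?F" using suppf by simp
    have "D (h1 + h2) = (\<Sum>b\<in>?F. tensor S S (S (R (h1 + h2) b) b) b)"
      by (rule DF[OF fin]) (auto simp: r)
    also have "\<dots> = (\<Sum>b\<in>?F. tensor S S (S (R h1 b) b) b) + (\<Sum>b\<in>?F. tensor S S (S (R h2 b) b) b)"
      by (simp add: r H.scale_left_distrib tensor_add_left sum.distrib)
    also have "\<dots> = D h1 + D h2" using DF[OF fin, of h1] DF[OF fin, of h2] by auto
    finally show ?thesis .
  qed
  have D_scale: "D (S c h) = tscale c (D h)" if "h \<in> V" for c h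
  proof -
    let ?F = "{b. R h b \<noteq> 0}"
    have r: "R (S c h) b = c * R h b" for b
      unfolding R_def using H.representation_scale[OF indS] that unfolding V_def by simp
    have "D (S c h) = (\<Sum>b\<in>?F. tensor S S (S (R (S c h) b) b) b)"
      by (rule DF[OF suppf]) (auto simp: r)
    also have "\<dots> = tscale c (\<Sum>b\<in>?F. tensor S S (S (R h b) b) b)"
      by (simp add: r tscale_sum tensor_scale_left[symmetric])
    also have "\<dots> = tscale c (D h)" using DF[OF suppf subset_refl, of h] by simp
    finally show ?thesis .
  qed
  have SV: "S c b \<in> V" if "b \<in> B" for c b
    using that BV H.subspace_scale[OF subV] by auto
  have D_in: "D h \<in> tensors S S V V" for h
    unfolding DF[OF suppf subset_refl]
    by (rule tensors_sum[OF suppf]) (use suppB SV BV in blast)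
  have D_basis: "D b = tensor S S b b" if "b \<in> B" for b
  proof -
    have r: "R b = (\<lambda>v. if v = b then 1 else 0)"
      unfolding R_def by (rule H.representation_basis[OF indS that])
    show ?thesis using DF[of "{b}" b] by (simp add: r)
  qed
  show ?thesis
    unfolding coalgebra_def S_def[symmetric] V_def[symmetric] D_def[symmetric] e'_def[symmetric]
  proof (intro conjI ballI)
    show "vector_space S" by (rule vS)
    show "H.subspace V" by (rule subV)
    show "hom_on S tscale V (tensors S S V V) D"
      unfolding hom_on_def lin_on_def using D_add D_scale D_in by auto
    show "lin_on S (*) V e'"
      unfolding lin_on_def using e'_add e'_scale by auto
  next
    fix v assume v: "v \<in> V"
    show "tassoc S S S V V V (map_tensor S S tscale S V V D id (D v)) =
          map_tensor S S S tscale V V id D (D v)"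
    proof -
      let ?F = "{b. R v b \<noteq> 0}"
      let ?r = "R v"
      have Dv: "D v = (\<Sum>b\<in>?F. tensor S S (S (?r b) b) b)" by (rule DF[OF suppf subset_refl])
      have mem: "\<And>b. b \<in> ?F \<Longrightarrow> S (?r b) b \<in> V \<and> b \<in> V" using suppB SV BV by blast
      have bal1: "balanced S S V V (\<lambda>a b. tensor tscale S (D a) (id b))"
        unfolding balanced_def
      proof (intro conjI ballI allI)
        fix x x' y assume "x \<in> V" "x' \<in> V" "y \<in> V"
        then show "tensor tscale S (D (x + x')) (id y) = tensor tscale S (D x) (id y) + tensor tscale S (D x') (id y)"
          by (simp only: D_add tensor_add_left)
      next
        fix x y y' assume "x \<in> V" "y \<in> V" "y' \<in> V"
        show "tensor tscale S (D x) (id (y + y')) = tensor tscale S (D x) (id y) + tensor tscale S (D x) (id y')"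
          by (simp only: id_apply tensor_add_right)
      next
        fix d x y assume "x \<in> V" "y \<in> V"
        then show "tensor tscale S (D (S d x)) (id y) = tensor tscale S (D x) (id (S d y))"
          by (simp only: D_scale id_apply tensor_scale_left[of tscale S d] tensor_scale_right[of tscale S _ d])
      qed
      have bal2: "balanced S S V V (\<lambda>a b. tensor S tscale (id a) (D b))"
        unfolding balanced_def
      proof (intro conjI ballI allI)
        fix x x' y assume "x \<in> V" "x' \<in> V" "y \<in> V"
        show "tensor S tscale (id (x + x')) (D y) = tensor S tscale (id x) (D y) + tensor S tscale (id x') (D y)"
          by (simp only: id_apply tensor_add_left)
      next
        fix x y y' assume "x \<in> V" "y \<in> V" "y' \<in> V"
        then show "tensor S tscale (id x) (D (y + y')) = tensor S tscale (id x) (D y) + tensor S tscale (id x) (D y')"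
          by (simp only: D_add tensor_add_right)
      next
        fix d x y assume "x \<in> V" "y \<in> V"
        then show "tensor S tscale (id (S d x)) (D y) = tensor S tscale (id x) (D (S d y))"
          by (simp only: D_scale id_apply tensor_scale_left[of S tscale d] tensor_scale_right[of S tscale _ d])
      qed
      have "map_tensor S S tscale S V V D id (D v) = (\<Sum>b\<in>?F. tensor tscale S (D (S (?r b) b)) (id b))"
        unfolding map_tensor_def Dv by (rule tlift_sum[OF vS vS subV subV bal1 suppf mem])
      also have "\<dots> = (\<Sum>b\<in>?F. tensor tscale S (tensor S S b b) (S (?r b) b))"
      proof (rule sum.cong[OF refl])
        fix b assume b: "b \<in> ?F"
        then have bB: "b \<in> B" using suppB by blast
        show "tensor tscale S (D (S (?r b) b)) (id b) = tensor tscale S (tensor S S b b) (S (?r b) b)"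
          using BV bB by (simp only: D_scale D_basis id_apply tensor_scale_left[of tscale S] tensor_scale_right[of tscale S] subset_iff)
      qed
      finally have lhs1: "map_tensor S S tscale S V V D id (D v) = (\<Sum>b\<in>?F. tensor tscale S (tensor S S b b) (S (?r b) b))" .
      have vT: "vector_space (tscale :: 'k \<Rightarrow> ('l\<Rightarrow>'l, 'l\<Rightarrow>'l, 'k) tens \<Rightarrow> _)" by (rule vs_tscale)
      have "tassoc S S S V V V (map_tensor S S tscale S V V D id (D v)) =
          (\<Sum>b\<in>?F. tlift S S V V (\<lambda>a b'. tensor S tscale a (tensor S S b' (S (?r b) b))) (tensor S S b b))"
        unfolding tassoc_def lhs1
        by (rule tlift_sum[OF vT vS tensors_subspace[OF vS subV] subV G_balanced[OF vS vS vS subV subV] suppf])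
           (use mem in \<open>auto intro: tensor_single_in\<close>)
      also have "\<dots> = (\<Sum>b\<in>?F. tensor S tscale b (tensor S S b (S (?r b) b)))"
        by (rule sum.cong[OF refl], rule tlift_single[OF vS vS subV subV k_balanced]) (use mem in auto)
      also have "\<dots> = (\<Sum>b\<in>?F. tensor S tscale (S (?r b) b) (D b))"
      proof (rule sum.cong[OF refl])
        fix b assume b: "b \<in> ?F"
        then have bB: "b \<in> B" using suppB by blast
        show "tensor S tscale b (tensor S S b (S (?r b) b)) = tensor S tscale (S (?r b) b) (D b)"
          by (simp only: D_basis[OF bB] tensor_scale_right[of S S] tensor_scale_right[of S tscale] tensor_scale_left[of S tscale])
      qed
      also have "\<dots> = map_tensor S S S tscale V V id D (D v)"
        unfolding map_tensor_def Dv using tlift_sum[OF vS vS subV subV bal2 suppf mem] by (simp only: id_apply)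
      finally show ?thesis .
    qed
  next
    fix v assume v: "v \<in> V"
    let ?F = "{b. R v b \<noteq> 0}"
    have bal: "balanced S S V V (\<lambda>a b. S (e' a) b)"
      unfolding balanced_def by (simp add: e'_add e'_scale H.scale_left_distrib H.scale_right_distrib mult.commute)
    have "tlift S S V V (\<lambda>a b. S (e' a) b) (D v) = (\<Sum>b\<in>?F. S (e' (S (R v b) b)) b)"
      unfolding DF[OF suppf subset_refl]
      by (rule tlift_sum[OF vS vS subV subV bal suppf]) (use suppB SV BV in blast)
    also have "\<dots> = (\<Sum>b\<in>?F. S (R v b) b)"
      using suppB e'_B by (intro sum.cong) (auto simp: e'_scale)
    also have "\<dots> = v" unfolding R_def using H.sum_nonzero_representation_eq[OF indS] v V_def by simp
    finally show "tlift S S V V (\<lambda>a b. S (e' a) b) (D v) = v" .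
  next
    fix v assume v: "v \<in> V"
    let ?F = "{b. R v b \<noteq> 0}"
    have bal: "balanced S S V V (\<lambda>a b. S (e' b) a)"
      unfolding balanced_def by (simp add: e'_add e'_scale H.scale_left_distrib H.scale_right_distrib mult.commute)
    have "tlift S S V V (\<lambda>a b. S (e' b) a) (D v) = (\<Sum>b\<in>?F. S (e' b) (S (R v b) b))"
      unfolding DF[OF suppf subset_refl]
      by (rule tlift_sum[OF vS vS subV subV bal suppf]) (use suppB SV BV in blast)
    also have "\<dots> = (\<Sum>b\<in>?F. S (R v b) b)"
      using suppB e'_B by (intro sum.cong) auto
    also have "\<dots> = v" unfolding R_def using H.sum_nonzero_representation_eq[OF indS] v V_def by simp
    finally show "tlift S S V V (\<lambda>a b. S (e' b) a) (D v) = v" .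
  qed
qed


theorem proposition4p9:
  fixes sL :: "'k::field \<Rightarrow> 'l::ab_group_add \<Rightarrow> 'l"
    and mu :: "('l, 'l, 'k) tens \<Rightarrow> 'l"
    and eta :: "'k \<Rightarrow> 'l"
    and Delta :: "'l \<Rightarrow> ('l, 'l, 'k) tens"
    and eps :: "'l \<Rightarrow> 'k"
  assumes "vector_space sL"
    and "algebra sL UNIV mu eta"
    and "coalgebra sL UNIV Delta eps"
    and "\<forall>c. eps (eta c) = c"
    and "\<forall>c. Delta (eta c) = map_tensor (*) (*) sL sL UNIV UNIV eta eta (tensor (*) (*) c 1)"
  shows "(\<forall>f \<in> Hom1 sL (eta 1).
            (\<lambda>t. Delta (f (mu t))) \<in> HomT1 sL (eta 1) \<and>
            split_map sL (eta 1) eps (\<lambda>t. Delta (f (mu t))) = tensor (hscale sL) (hscale sL) f f)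
       \<and> (\<forall>B. B \<subseteq> Hom1 sL (eta 1) \<and> \<not> module.dependent (hscale sL) B \<longrightarrow>
            coalgebra (hscale sL) (module.span (hscale sL) B) (DeltaB sL B) (\<lambda>f. eps (f (eta 1))))"
proof (rule conjI)
  show "\<forall>f \<in> Hom1 sL (eta 1).
            (\<lambda>t. Delta (f (mu t))) \<in> HomT1 sL (eta 1) \<and>
            split_map sL (eta 1) eps (\<lambda>t. Delta (f (mu t))) = tensor (hscale sL) (hscale sL) f f"
    using part1[OF assms(1,2,3,5)] by blast
  show "\<forall>B. B \<subseteq> Hom1 sL (eta 1) \<and> \<not> module.dependent (hscale sL) B \<longrightarrow>
            coalgebra (hscale sL) (module.span (hscale sL) B) (DeltaB sL B) (\<lambda>f. eps (f (eta 1)))"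
    using part2[OF assms(1,3,4)] by blast
qed

end
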